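(* Let $p>2$ be an integer and $\theta\in(0,1)$. For $\bm q\in\mathbb S^{n-1}$ let $\rho=\tfrac12\min_{1\le i\le n}\min\{\|\bm q-\bm e_i\|_2^2,\|\bm q+\bm e_i\|_2^2\}$. Then $$\rho\le\frac{C_p}{\theta(1-\theta)}\Big(\theta-\mathbb E_\Omega\|\bm q_\Omega\|_2^p\Big),\qquad C_p=\big(1-2(0.5)^{p/2}\big)^{-1}.$$
   Context: $\bm e_i$ are the standard basis vectors of $\mathbb R^n$. $\Omega$ denotes a random subset of $\{1,\dots,n\}$ in which each index is included independently with probability $\theta$ (the support of a vector with i.i.d. $\mathrm{Ber}(\theta)$ entries), and $\bm q_\Omega$ is the subvector of $\bm q$ with entries indexed by $\Omega$ (so $\|\bm q_\emptyset\|_2=0$). *)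

theory Defs
  imports "HOL-Analysis.Analysis" "HOL-Probability.Probability"
begin

definition bern_subset :: "real \<Rightarrow> ('n::finite) set pmf" where
  "bern_subset \<theta> = map_pmf (\<lambda>b. {i. b i}) (Pi_pmf UNIV False (\<lambda>_. bernoulli_pmf \<theta>))"

definition subvec_norm :: "real ^ ('n::finite) \<Rightarrow> 'n set \<Rightarrow> real" where
  "subvec_norm q \<Omega> = sqrt (\<Sum>i\<in>\<Omega>. (q $ i)\<^sup>2)"

end

theory Submission
  imports Defs
begin

lemma E_sub:
  fixes S :: "'n::finite set"
  assumes "0 \<le> \<theta>" "\<theta> \<le> 1"
  shows "measure_pmf.expectation (bern_subset \<theta>) (\<lambda>\<Omega>. if S \<subseteq> \<Omega> then 1 else 0 :: real) = \<theta> ^ card S"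
proof -
  have eq: "(\<lambda>b::'n\<Rightarrow>bool. if S \<subseteq> {i. b i} then 1 else 0 :: real) =
     (\<lambda>b. \<Prod>k\<in>UNIV. (\<lambda>k v. if k \<in> S then (if v then 1 else 0) else 1) k (b k))"
    by (rule ext) (auto simp: prod_zero_iff intro!: prod.neutral)
  have "measure_pmf.expectation (bern_subset \<theta>) (\<lambda>\<Omega>. if S \<subseteq> \<Omega> then 1 else 0 :: real)
     = measure_pmf.expectation (Pi_pmf UNIV False (\<lambda>_. bernoulli_pmf \<theta>)) (\<lambda>b::'n\<Rightarrow>bool. if S \<subseteq> {i. b i} then 1 else 0 :: real)"
    unfolding bern_subset_def by simp
  also have "\<dots> = (\<Prod>k\<in>UNIV. measure_pmf.expectation (bernoulli_pmf \<theta>) (\<lambda>v. if k \<in> S then (if v then 1 else 0) else 1::real))"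
    unfolding eq by (rule expectation_prod_Pi_pmf) (auto intro: integrable_measure_pmf_finite)
  also have "\<dots> = (\<Prod>k\<in>UNIV. if k \<in> S then \<theta> else 1)"
    using assms by (intro prod.cong) auto
  also have "\<dots> = \<theta> ^ card S"
    by (simp add: prod.If_cases)
  finally show ?thesis .
qed

lemma sum_ind: "(\<Sum>i\<in>(UNIV::'n::finite set). if i\<in>\<Omega> then f i else 0) = sum f \<Omega>"
  by (simp add: sum.If_cases Collect_mem_eq)

lemma sum_ind2: "(\<Sum>i\<in>(UNIV::'n::finite set). x i * (if {i} \<subseteq> \<Omega> then 1 else (0::real))) = sum x \<Omega>"
proof -
  have "(\<lambda>i. x i * (if {i} \<subseteq> \<Omega> then 1 else (0::real))) = (\<lambda>i. if i\<in>\<Omega> then x i else 0)" (is "_ = ?r") by auto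
  then have "(\<Sum>i\<in>(UNIV::'n::finite set). x i * (if {i} \<subseteq> \<Omega> then 1 else (0::real))) = sum ?r UNIV"
    by (rule arg_cong[where f = "\<lambda>f. sum f UNIV"])
  also have "\<dots> = sum x \<Omega>" by (rule sum_ind)
  finally show ?thesis .
qed

lemma sum_ind3: "(\<Sum>i\<in>(UNIV::'n::finite set). \<Sum>j\<in>UNIV. x i * x j * (if {i,j} \<subseteq> \<Omega> then 1 else (0::real)))
   = (\<Sum>i\<in>\<Omega>. \<Sum>j\<in>\<Omega>. x i * x j)"
proof -
  have "(\<Sum>j\<in>UNIV. x i * x j * (if {i,j} \<subseteq> \<Omega> then 1 else (0::real))) = (if i \<in> \<Omega> then (\<Sum>j\<in>\<Omega>. x i * x j) else 0)" for i
  proof -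
    have e: "(\<lambda>j. x i * x j * (if {i,j} \<subseteq> \<Omega> then 1 else (0::real))) = (\<lambda>j. if j\<in>\<Omega> then (if i \<in> \<Omega> then x i * x j else 0) else 0)" by auto
    have "(\<Sum>j\<in>UNIV. x i * x j * (if {i,j} \<subseteq> \<Omega> then 1 else (0::real))) = (\<Sum>j\<in>\<Omega>. if i \<in> \<Omega> then x i * x j else 0)"
      unfolding e by (rule sum_ind)
    then show ?thesis by simp
  qed
  then have "(\<Sum>i\<in>(UNIV::'n::finite set). \<Sum>j\<in>UNIV. x i * x j * (if {i,j} \<subseteq> \<Omega> then 1 else (0::real)))
    = (\<Sum>i\<in>UNIV. if i \<in> \<Omega> then (\<Sum>j\<in>\<Omega>. x i * x j) else 0)" by simp
  also have "\<dots> = (\<Sum>i\<in>\<Omega>. \<Sum>j\<in>\<Omega>. x i * x j)" by (rule sum_ind)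
  finally show ?thesis .
qed

lemma fin_int: "integrable (measure_pmf (bern_subset \<theta>)) (f :: ('n::finite) set \<Rightarrow> real)"
  by (rule integrable_measure_pmf_finite) simp

lemma E_T:
  fixes x :: "'n::finite \<Rightarrow> real"
  assumes "0 \<le> \<theta>" "\<theta> \<le> 1"
  shows "measure_pmf.expectation (bern_subset \<theta>) (\<lambda>\<Omega>. \<Sum>i\<in>\<Omega>. x i) = \<theta> * (\<Sum>i\<in>UNIV. x i)"
proof -
  have eq: "(\<lambda>\<Omega>. \<Sum>i\<in>\<Omega>. x i) = (\<lambda>\<Omega>. \<Sum>i\<in>UNIV. x i * (if {i} \<subseteq> \<Omega> then 1 else 0))"
    by (rule ext) (rule sum_ind2[symmetric])
  show ?thesis unfolding eq
    apply (subst Bochner_Integration.integral_sum)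
     apply (rule fin_int)
    apply (simp only: integral_mult_right_zero E_sub[OF assms])
    by (simp add: sum_distrib_left mult.commute)
qed

lemma E_T2:
  fixes x :: "'n::finite \<Rightarrow> real"
  assumes "0 \<le> \<theta>" "\<theta> \<le> 1"
  shows "measure_pmf.expectation (bern_subset \<theta>) (\<lambda>\<Omega>. (\<Sum>i\<in>\<Omega>. x i)^2)
      = \<theta>^2 * (\<Sum>i\<in>UNIV. x i)^2 + (\<theta> - \<theta>^2) * (\<Sum>i\<in>UNIV. (x i)^2)"
proof -
  have eq: "(\<lambda>\<Omega>. (\<Sum>i\<in>\<Omega>. x i)^2) = (\<lambda>\<Omega>. \<Sum>i\<in>UNIV. \<Sum>j\<in>UNIV. x i * x j * (if {i,j} \<subseteq> \<Omega> then 1 else 0))"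
    by (rule ext) (simp only: sum_ind3 power2_eq_square sum_product)
  have c: "\<theta> ^ card {i,j} = \<theta>^2 + (if i = j then \<theta> - \<theta>^2 else 0)" for i j :: 'n
    by (cases "i = j") (auto simp: power2_eq_square)
  have "measure_pmf.expectation (bern_subset \<theta>) (\<lambda>\<Omega>. (\<Sum>i\<in>\<Omega>. x i)^2)
     = (\<Sum>i\<in>UNIV. \<Sum>j\<in>UNIV. x i * x j * \<theta> ^ card {i,j})"
    unfolding eq
    apply (subst Bochner_Integration.integral_sum, rule fin_int)
    apply (subst Bochner_Integration.integral_sum, rule fin_int)
    apply (simp only: integral_mult_right_zero E_sub[OF assms])
    done
  also have "\<dots> = (\<Sum>i\<in>UNIV. \<Sum>j\<in>UNIV. \<theta>^2 * (x i * x j)) + (\<Sum>i\<in>UNIV. \<Sum>j\<in>UNIV. if i = j then (\<theta> - \<theta>^2) * (x i * x j) else 0)"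
  proof -
    have "(\<Sum>i\<in>UNIV. \<Sum>j\<in>UNIV. x i * x j * \<theta> ^ card {i,j}) =
       (\<Sum>i\<in>UNIV. \<Sum>j\<in>UNIV. \<theta>^2 * (x i * x j) + (if i = j then (\<theta> - \<theta>^2) * (x i * x j) else 0))"
      by (intro sum.cong refl) (simp add: c algebra_simps)
    then show ?thesis by (simp only: sum.distrib)
  qed
  also have "\<dots> = \<theta>^2 * (\<Sum>i\<in>UNIV. x i)^2 + (\<theta> - \<theta>^2) * (\<Sum>i\<in>UNIV. (x i)^2)"
    by (simp add: sum_distrib_left[symmetric] power2_eq_square sum_product mult.assoc)
  finally show ?thesis .
qed

lemma pointwise:
  fixes T :: real and p :: nat
  assumes "0 \<le> T" "T \<le> 1" "p > 2"
  shows "sqrt T ^ p \<le> T - (if p = 3 then 1/2 else 1) * (T - T^2)"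
proof -
  define u where "u = sqrt T"
  have u: "0 \<le> u" "u \<le> 1" "T = u^2" using assms by (auto simp: u_def)
  show ?thesis
  proof (cases "p = 3")
    case True
    have "u^3 \<le> u^2 - 1/2 * (u^2 - (u^2)^2)"
    proof -
      have "0 \<le> u^2 * (1 - u)^2" by simp
      then show ?thesis by (simp add: algebra_simps power2_eq_square power3_eq_cube power4_eq_xxxx)
    qed
    then show ?thesis using True u by (simp add: u_def[symmetric])
  next
    case False
    then have "p \<ge> 4" using assms by simp
    then have "u^p \<le> u^4" using u by (intro power_decreasing) auto
    then show ?thesis using False u by (simp add: u_def[symmetric] power_mult[symmetric])
  qed
qed

theorem mainTheorem7:
  fixes q :: "real ^ 'n" and p :: nat and \<theta> :: real
  assumes "p > 2" and "0 < \<theta>" and "\<theta> < 1" and "norm q = 1"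
  shows "(1/2) * (MIN i. min ((norm (q - axis i 1))\<^sup>2) ((norm (q + axis i 1))\<^sup>2))
     \<le> (1 / (1 - 2 * (0.5::real) powr (real p / 2))) / (\<theta> * (1 - \<theta>)) *
        (\<theta> - measure_pmf.expectation (bern_subset \<theta>) (\<lambda>\<Omega>. (subvec_norm q \<Omega>) ^ p))"
proof -
  define x where "x i = (q $ i)^2" for i
  define k :: real where "k = (if p = 3 then 1/2 else 1)"
  define c :: real where "c = 1 - 2 * (0.5::real) powr (real p / 2)"
  define T where "T \<Omega> = (\<Sum>i\<in>\<Omega>. x i)" for \<Omega>
  define s where "s = (\<Sum>i\<in>UNIV. (x i)^2)"
  have x0: "x i \<ge> 0" for i by (simp add: x_def)
  have sumx: "(\<Sum>i\<in>UNIV. x i) = 1"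
  proof -
    have "(norm q)^2 = q \<bullet> q" by (rule power2_norm_eq_inner)
    also have "\<dots> = (\<Sum>i\<in>UNIV. x i)" by (simp add: inner_vec_def x_def power2_eq_square)
    finally show ?thesis using assms(4) by simp
  qed
  have T01: "0 \<le> T \<Omega> \<and> T \<Omega> \<le> 1" for \<Omega>
  proof -
    have "T \<Omega> \<le> (\<Sum>i\<in>UNIV. x i)" unfolding T_def by (rule sum_mono2) (auto intro: x0)
    then show ?thesis using sumx by (auto simp: T_def intro: sum_nonneg x0)
  qed
  have sv: "subvec_norm q \<Omega> = sqrt (T \<Omega>)" for \<Omega> by (simp add: subvec_norm_def T_def x_def)
  have th: "0 \<le> \<theta>" "\<theta> \<le> 1" using assms by auto
  have Ef: "measure_pmf.expectation (bern_subset \<theta>) (\<lambda>\<Omega>. (subvec_norm q \<Omega>) ^ p)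
      \<le> measure_pmf.expectation (bern_subset \<theta>) (\<lambda>\<Omega>. T \<Omega> - k * (T \<Omega> - (T \<Omega>)^2))"
    unfolding sv k_def
    by (rule integral_mono[OF fin_int fin_int]) (use T01 pointwise assms(1) in blast)
  have ET: "measure_pmf.expectation (bern_subset \<theta>) T = \<theta>"
    using E_T[OF th, of x] sumx by (simp add: T_def[abs_def])
  have ET2: "measure_pmf.expectation (bern_subset \<theta>) (\<lambda>\<Omega>. (T \<Omega>)^2) = \<theta>^2 + (\<theta> - \<theta>^2) * s"
    using E_T2[OF th, of x] sumx by (simp add: T_def s_def)
  have Eg: "measure_pmf.expectation (bern_subset \<theta>) (\<lambda>\<Omega>. T \<Omega> - k * (T \<Omega> - (T \<Omega>)^2))
      = \<theta> - k * (\<theta> * (1 - \<theta>) * (1 - s))"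
  proof -
    have "measure_pmf.expectation (bern_subset \<theta>) (\<lambda>\<Omega>. T \<Omega> - k * (T \<Omega> - (T \<Omega>)^2))
      = measure_pmf.expectation (bern_subset \<theta>) T - k * (measure_pmf.expectation (bern_subset \<theta>) T
          - measure_pmf.expectation (bern_subset \<theta>) (\<lambda>\<Omega>. (T \<Omega>)^2))"
      by (simp add: fin_int Bochner_Integration.integral_diff)
    also have "\<dots> = \<theta> - k * (\<theta> * (1 - \<theta>) * (1 - s))"
      unfolding ET ET2 by (simp add: algebra_simps power2_eq_square)
    finally show ?thesis .
  qed
  have cpos: "0 < c"
  proof -
    have "(0.5::real) powr (real p / 2) < 0.5 powr 1"
      using assms(1) by (intro powr_less_mono') auto
    then show ?thesis by (simp add: c_def)
  qed
  have ck: "c \<le> k"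
  proof (cases "p = 3")
    case True
    have "(0.5::real) powr 2 \<le> 0.5 powr (real p / 2)"
      using True by (intro powr_mono') auto
    moreover have "(0.5::real) powr 2 = 1/4" by (simp add: powr_numeral power2_eq_square)
    ultimately have h: "1/4 \<le> (0.5::real) powr (real p / 2)" by simp
    have "k = 1/2" using True by (simp add: k_def)
    then show ?thesis using h unfolding c_def by linarith
  next
    case False
    then show ?thesis by (simp add: c_def k_def)
  qed
  have kpos: "0 < k" by (simp add: k_def)
  obtain m where m: "\<And>i. \<bar>q $ i\<bar> \<le> \<bar>q $ m\<bar>"
  proof -
    have "Max (range (\<lambda>i. \<bar>q $ i\<bar>)) \<in> range (\<lambda>i. \<bar>q $ i\<bar>)" by (rule Max_in) auto
    then obtain m where "Max (range (\<lambda>i. \<bar>q $ i\<bar>)) = \<bar>q $ m\<bar>" by (metis (no_types, lifting) imageE)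
    then have mx: "Max (range (\<lambda>i. \<bar>q $ i\<bar>)) = \<bar>q $ m\<bar>" .
    show ?thesis
    proof (rule that[of m])
      fix i
      have "\<bar>q $ i\<bar> \<le> Max (range (\<lambda>i. \<bar>q $ i\<bar>))" by (rule Max_ge) auto
      then show "\<bar>q $ i\<bar> \<le> \<bar>q $ m\<bar>" using mx by simp
    qed
  qed
  have qm1: "\<bar>q $ m\<bar> \<le> 1"
  proof -
    have "x m \<le> (\<Sum>i\<in>UNIV. x i)" by (rule member_le_sum) (auto intro: x0)
    then have "(q $ m)^2 \<le> 1" using sumx by (simp add: x_def)
    then show ?thesis by (simp add: abs_square_le_1)
  qed
  have s_le: "s \<le> \<bar>q $ m\<bar>"
  proof -
    have "s \<le> (\<Sum>i\<in>UNIV. (q $ m)^2 * x i)"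
      unfolding s_def
    proof (rule sum_mono)
      fix i
      have "x i \<le> (q $ m)^2" using m[of i] by (simp add: x_def abs_le_square_iff)
      then show "(x i)^2 \<le> (q $ m)^2 * x i" using x0[of i] by (simp add: power2_eq_square mult_right_mono)
    qed
    also have "\<dots> = (q $ m)^2" by (simp add: sum_distrib_left[symmetric] sumx)
    also have "\<dots> = \<bar>q $ m\<bar> * \<bar>q $ m\<bar>" by (simp add: power2_eq_square abs_mult_self_eq)
    also have "\<dots> \<le> \<bar>q $ m\<bar>" using qm1 by (intro mult_left_le) auto
    finally show ?thesis .
  qed
  have qq: "q \<bullet> q = 1"
  proof -
    have "q \<bullet> q = (norm q)^2" by (rule power2_norm_eq_inner[symmetric])
    then show ?thesis using assms(4) by simp
  qed
  have aa: "axis m (1::real) \<bullet> axis m 1 = 1" using norm_axis_1[of m] by (simp add: power2_norm_eq_inner[symmetric] del: norm_axis_1)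
  have nm: "(norm (q - axis m 1))\<^sup>2 = 2 - 2 * q $ m"
  proof -
    have "(norm (q - axis m 1))\<^sup>2 = (q - axis m 1) \<bullet> (q - axis m 1)" by (rule power2_norm_eq_inner)
    also have "\<dots> = q \<bullet> q - 2 * q $ m + axis m (1::real) \<bullet> axis m 1"
      by (simp add: inner_diff_left inner_diff_right inner_axis inner_axis')
    finally show ?thesis using qq aa by simp
  qed
  have np: "(norm (q + axis m 1))\<^sup>2 = 2 + 2 * q $ m"
  proof -
    have "(norm (q + axis m 1))\<^sup>2 = (q + axis m 1) \<bullet> (q + axis m 1)" by (rule power2_norm_eq_inner)
    also have "\<dots> = q \<bullet> q + 2 * q $ m + axis m (1::real) \<bullet> axis m 1"
      by (simp add: inner_add_left inner_add_right inner_axis inner_axis')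
    finally show ?thesis using qq aa by simp
  qed
  have "(MIN i. min ((norm (q - axis i 1))\<^sup>2) ((norm (q + axis i 1))\<^sup>2))
      \<le> min ((norm (q - axis m 1))\<^sup>2) ((norm (q + axis m 1))\<^sup>2)"
    by (rule Min_le) auto
  also have "\<dots> = 2 - 2 * \<bar>q $ m\<bar>" unfolding nm np by (simp add: abs_if min_def)
  finally have L: "(1/2) * (MIN i. min ((norm (q - axis i 1))\<^sup>2) ((norm (q + axis i 1))\<^sup>2)) \<le> 1 - s"
    using s_le by simp
  have s1: "s \<le> 1" using s_le qm1 by simp
  have tt: "0 < \<theta> * (1 - \<theta>)" using assms by simp
  have "1 - s \<le> (1/c) * k * (1 - s)"
  proof -
    have "1 \<le> (1/c) * k" using cpos ck by (simp add: field_simps)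
    moreover have "0 \<le> 1 - s" using s1 by simp
    ultimately have "1 * (1 - s) \<le> (1/c) * k * (1 - s)" by (rule mult_right_mono)
    then show ?thesis by simp
  qed
  also have "\<dots> = (1/c) / (\<theta> * (1 - \<theta>)) * (k * (\<theta> * (1 - \<theta>) * (1 - s)))"
  proof -
    have g: "\<And>t::real. t \<noteq> 0 \<Longrightarrow> (1/c)*k*(1-s) = (1/c)/t * (k*(t*(1-s)))" using cpos by (simp add: field_simps)
    have "\<theta> * (1 - \<theta>) \<noteq> 0" using tt by linarith
    then show ?thesis by (rule g)
  qed
  also have "\<dots> \<le> (1/c) / (\<theta> * (1 - \<theta>)) *
        (\<theta> - measure_pmf.expectation (bern_subset \<theta>) (\<lambda>\<Omega>. (subvec_norm q \<Omega>) ^ p))"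
    using Ef Eg cpos tt by (intro mult_left_mono) auto
  finally show ?thesis using L unfolding c_def by linarith
qed

end
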